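(* For every value of the memory parameter $p\ge0$, there exist instances of the dynamics described in the context satisfying (A1)–(A3), in which every $A^t$ is a user best response to $H^t$ and every $H^{t+1}$ lies in $\arg\min_{H\in\mathcal H^m}L^t(H)$ but the service tie-breaking is not required to be sticky, together with a time $t$ such that $(H^t,A^t)$ is zero-loss while $(H^\tau,A^\tau)$ is not zero-loss for some $\tau>t$. In other words, without sticky tie-breaking, a zero-loss state at time $t$ does not guarantee zero-loss states at later times.
   Context: Setting. There are $n\ge 1$ users and $m\ge 1$ services. User $i\in\{1,\dots,n\}$ has fixed features $x_i\in\mathcal X$ and a fixed label $y_i\in\{+1,-1\}$. $\mathcal H$ is a set of classifiers $h:\mathcal X\to\{+1,-1\}$. There is a utility $u:\mathcal X\times\mathcal H\to\mathbb R$ (written $u(x,h)$) and a loss $\ell:\mathcal H\times\mathcal X\times\{+1,-1\}\to\mathbb R$ satisfying: (A1) for any $h_1,h_2\in\mathcal H$ and $x\in\mathcal X$ with $h_1(x)=-1$ and $h_2(x)=+1$, we have $u(x,h_1)\le 0<u(x,h_2)$; (A2) for all $h\in\mathcal H$ the loss is non-negative, $-y\,\ell(h,x,y)$ is strictly monotonically increasing with $u(x,h)$, and there exists $v>0$ such that $u(x,h)=0$ implies $\ell(h,x,y)=v$; (A3) (realizability) there is $h\in\mathcal H$ with $\ell(h,x_i,y_i)=0$ for all $i=1,\dots,n$. Dynamics. Fix $q>1$ and $p\ge 0$. A state at time $t$ is $(H^t,A^t)$ with $H^t=(h^t_1,\dots,h^t_m)\in\mathcal H^m$ and $A^t\in\mathbb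 R_+^{n\times m}$. Given classifiers $H$, a user best response is any $A\in\arg\max_{A\in\mathbb R_+^{n\times m}}\sum_{i=1}^n\big[\sum_{j=1}^m A_{ij}u(x_i,h_j)-\frac1q(\sum_{j=1}^m A_{ij})^q\big]$. Memory: $M^{-1}=0$ and $M^t=\frac{A^t}{1+p}+\frac{pM^{t-1}}{1+p}$ for $t\ge0$. Define $L^t(H)=\sum_{j=1}^m\sum_{i=1}^n\frac{M^t_{ij}}{\sum_{k=1}^n M^t_{kj}}\ell(h_j,x_i,y_i)$, with the fraction taken to be $0$ when $\sum_k M^t_{kj}=0$. Sticky tie-breaking (not imposed here) would mean: whenever $L^{t-1}(H^t)=L^t(H^t)$, $H^{t+1}=H^t$. $H^0$ is arbitrary. Zero-loss. A state $(H,A)$ is zero-loss if every service $j$ satisfies: (1) $A_{ij}\ell(h_j,x_i,y_i)=0$ for all $i$, and (2) $u(x_i,h_j)\le 0$ for all $i$ with $y_i=-1$. *)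

theory Defs
  imports Complex_Main
begin

(* Concrete carriers: features x :: nat (X = UNIV :: nat set), labels :: int in {1,-1},
   classifiers h :: nat => int with values in {1,-1}; users indexed 0..<n, services 0..<m.
   Matrices are functions nat => nat => real (only entries i<n, j<m matter). *)

type_synonym clf = "nat \<Rightarrow> int"

definition classifiers_ok :: "clf set \<Rightarrow> bool" where
  "classifiers_ok Hs \<longleftrightarrow> (\<forall>h\<in>Hs. \<forall>x. h x = 1 \<or> h x = -1)"

definition A1 :: "clf set \<Rightarrow> (nat \<Rightarrow> clf \<Rightarrow> real) \<Rightarrow> bool" where
  "A1 Hs u \<longleftrightarrow> (\<forall>h1\<in>Hs. \<forall>h2\<in>Hs. \<forall>x. h1 x = -1 \<and> h2 x = 1 \<longrightarrow> u x h1 \<le> 0 \<and> 0 < u x h2)"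

definition A2 :: "clf set \<Rightarrow> (nat \<Rightarrow> clf \<Rightarrow> real) \<Rightarrow> (clf \<Rightarrow> nat \<Rightarrow> int \<Rightarrow> real) \<Rightarrow> bool" where
  "A2 Hs u l \<longleftrightarrow>
     (\<forall>h\<in>Hs. \<forall>x. \<forall>y\<in>{1,-1}. l h x y \<ge> 0) \<and>
     (\<forall>x. \<forall>y\<in>{1,-1}. \<forall>h1\<in>Hs. \<forall>h2\<in>Hs.
        u x h1 < u x h2 \<longrightarrow> - of_int y * l h1 x y < - of_int y * l h2 x y) \<and>
     (\<exists>v>0. \<forall>h\<in>Hs. \<forall>x. \<forall>y\<in>{1,-1}. u x h = 0 \<longrightarrow> l h x y = v)"

definition A3 :: "nat \<Rightarrow> (nat \<Rightarrow> nat) \<Rightarrow> (nat \<Rightarrow> int) \<Rightarrow> clf set \<Rightarrow> (clf \<Rightarrow> nat \<Rightarrow> int \<Rightarrow> real) \<Rightarrow> bool" where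
  "A3 n x y Hs l \<longleftrightarrow> (\<exists>h\<in>Hs. \<forall>i<n. l h (x i) (y i) = 0)"

definition user_obj :: "real \<Rightarrow> nat \<Rightarrow> nat \<Rightarrow> (nat \<Rightarrow> nat) \<Rightarrow> (nat \<Rightarrow> clf \<Rightarrow> real)
    \<Rightarrow> (nat \<Rightarrow> clf) \<Rightarrow> (nat \<Rightarrow> nat \<Rightarrow> real) \<Rightarrow> real" where
  "user_obj q n m x u H A =
     (\<Sum>i<n. (\<Sum>j<m. A i j * u (x i) (H j)) - (1/q) * (\<Sum>j<m. A i j) powr q)"

definition nonneg_mat :: "nat \<Rightarrow> nat \<Rightarrow> (nat \<Rightarrow> nat \<Rightarrow> real) \<Rightarrow> bool" where
  "nonneg_mat n m A \<longleftrightarrow> (\<forall>i<n. \<forall>j<m. A i j \<ge> 0)"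

definition best_response :: "real \<Rightarrow> nat \<Rightarrow> nat \<Rightarrow> (nat \<Rightarrow> nat) \<Rightarrow> (nat \<Rightarrow> clf \<Rightarrow> real)
    \<Rightarrow> (nat \<Rightarrow> clf) \<Rightarrow> (nat \<Rightarrow> nat \<Rightarrow> real) \<Rightarrow> bool" where
  "best_response q n m x u H A \<longleftrightarrow> nonneg_mat n m A \<and>
     (\<forall>A'. nonneg_mat n m A' \<longrightarrow> user_obj q n m x u H A' \<le> user_obj q n m x u H A)"

(* Memory: M^{-1} = 0, M^t = A^t/(1+p) + p M^{t-1}/(1+p) *)
fun memory :: "real \<Rightarrow> (nat \<Rightarrow> nat \<Rightarrow> nat \<Rightarrow> real) \<Rightarrow> nat \<Rightarrow> nat \<Rightarrow> nat \<Rightarrow> real" where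
  "memory p A 0 = (\<lambda>i j. A 0 i j / (1 + p))"
| "memory p A (Suc t) = (\<lambda>i j. A (Suc t) i j / (1 + p) + p * memory p A t i j / (1 + p))"

definition service_loss :: "nat \<Rightarrow> nat \<Rightarrow> (nat \<Rightarrow> nat) \<Rightarrow> (nat \<Rightarrow> int) \<Rightarrow> (clf \<Rightarrow> nat \<Rightarrow> int \<Rightarrow> real)
    \<Rightarrow> (nat \<Rightarrow> nat \<Rightarrow> real) \<Rightarrow> (nat \<Rightarrow> clf) \<Rightarrow> real" where
  "service_loss n m x y l M H =
     (\<Sum>j<m. \<Sum>i<n. (if (\<Sum>k<n. M k j) = 0 then 0 else M i j / (\<Sum>k<n. M k j))
                      * l (H j) (x i) (y i))"

definition in_Hm :: "nat \<Rightarrow> clf set \<Rightarrow> (nat \<Rightarrow> clf) \<Rightarrow> bool" where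
  "in_Hm m Hs H \<longleftrightarrow> (\<forall>j<m. H j \<in> Hs)"

definition zero_loss :: "nat \<Rightarrow> nat \<Rightarrow> (nat \<Rightarrow> nat) \<Rightarrow> (nat \<Rightarrow> int) \<Rightarrow> (nat \<Rightarrow> clf \<Rightarrow> real)
    \<Rightarrow> (clf \<Rightarrow> nat \<Rightarrow> int \<Rightarrow> real) \<Rightarrow> (nat \<Rightarrow> clf) \<Rightarrow> (nat \<Rightarrow> nat \<Rightarrow> real) \<Rightarrow> bool" where
  "zero_loss n m x y u l H A \<longleftrightarrow>
     (\<forall>j<m. (\<forall>i<n. A i j * l (H j) (x i) (y i) = 0) \<and>
            (\<forall>i<n. y i = -1 \<longrightarrow> u (x i) (H j) \<le> 0))"

end

theory Submission
  imports Defs "HOL-Analysis.Analysis"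
begin

lemma young1:
  fixes q a :: real assumes "q > 1" "a \<ge> 0"
  shows "a - (1/q) * a powr q \<le> 1 - 1/q"
proof -
  define r where "r = q / (q - 1)"
  have r1: "r > 1" using assms unfolding r_def by (simp add: field_simps)
  have rr: "1/q + 1/r = 1" using assms unfolding r_def by (simp add: field_simps)
  have "a * 1 \<le> a powr q / q + 1 powr r / r"
    by (rule Youngs_inequality) (use assms r1 rr in auto)
  then show ?thesis using rr by (simp add: field_simps)
qed

definition hg :: clf where "hg = (\<lambda>_. -1)"
definition hb :: clf where "hb = (\<lambda>_. 1)"
definition uu :: "nat \<Rightarrow> clf \<Rightarrow> real" where "uu x h = (if h x = 1 then 1 else -1)"
definition ll :: "clf \<Rightarrow> nat \<Rightarrow> int \<Rightarrow> real" where "ll h x y = (if h x = y then 0 else 2)"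
definition HH :: "nat \<Rightarrow> nat \<Rightarrow> clf" where "HH s = (\<lambda>j. if s = 1 then hb else hg)"
definition AA :: "nat \<Rightarrow> nat \<Rightarrow> nat \<Rightarrow> real" where "AA s = (\<lambda>i j. if s = 1 then 1 else 0)"

lemma mem_nonneg: "p \<ge> 0 \<Longrightarrow> memory p AA s i j \<ge> 0"
  by (induction s) (auto simp: AA_def)

lemma mem0: "memory p AA 0 i j = 0"
  by (simp add: AA_def)

theorem proposition3:
  fixes p q :: real
  assumes "p \<ge> 0" and "q > 1"
  shows "\<exists>(n::nat) (m::nat) (x::nat \<Rightarrow> nat) (y::nat \<Rightarrow> int) (Hs::clf set)
            (u::nat \<Rightarrow> clf \<Rightarrow> real) (l::clf \<Rightarrow> nat \<Rightarrow> int \<Rightarrow> real)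
            (Hseq::nat \<Rightarrow> nat \<Rightarrow> clf) (Aseq::nat \<Rightarrow> nat \<Rightarrow> nat \<Rightarrow> real) (t::nat) (\<tau>::nat).
     n \<ge> 1 \<and> m \<ge> 1 \<and> (\<forall>i<n. y i = 1 \<or> y i = -1) \<and>
     classifiers_ok Hs \<and> A1 Hs u \<and> A2 Hs u l \<and> A3 n x y Hs l \<and>
     (\<forall>s. in_Hm m Hs (Hseq s)) \<and>
     (\<forall>s. best_response q n m x u (Hseq s) (Aseq s)) \<and>
     (\<forall>s. \<forall>H. in_Hm m Hs H \<longrightarrow>
          service_loss n m x y l (memory p Aseq s) (Hseq (Suc s))
            \<le> service_loss n m x y l (memory p Aseq s) H) \<and>
     zero_loss n m x y u l (Hseq t) (Aseq t) \<and>
     t < \<tau> \<and> \<not> zero_loss n m x y u l (Hseq \<tau>) (Aseq \<tau>)"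
proof -
  let ?x = "\<lambda>_::nat. 0::nat" and ?y = "\<lambda>_::nat. -1::int" and ?Hs = "{hg, hb}"
  have c1: "classifiers_ok ?Hs" by (auto simp: classifiers_ok_def hg_def hb_def)
  have c2: "A1 ?Hs uu" by (auto simp: A1_def hg_def hb_def uu_def)
  have c3: "A2 ?Hs uu ll" unfolding A2_def
    by (auto simp: hg_def hb_def uu_def ll_def intro: exI[of _ 1])
  have c4: "A3 1 ?x ?y ?Hs ll" by (auto simp: A3_def hg_def ll_def)
  have c5: "\<forall>s. in_Hm 1 ?Hs (HH s)" by (auto simp: in_Hm_def HH_def)
  have c6: "best_response q 1 1 ?x uu (HH s) (AA s)" for s
  proof (cases "s = 1")
    case True
    show ?thesis unfolding best_response_def
    proof (intro conjI allI impI)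
      show "nonneg_mat 1 1 (AA s)" by (simp add: nonneg_mat_def AA_def)
      fix A' assume "nonneg_mat 1 1 A'"
      then have "A' 0 0 \<ge> 0" by (simp add: nonneg_mat_def)
      from young1[OF assms(2) this] show "user_obj q 1 1 ?x uu (HH s) A' \<le> user_obj q 1 1 ?x uu (HH s) (AA s)"
        using True by (simp add: user_obj_def HH_def AA_def uu_def hb_def)
    qed
  next
    case False
    show ?thesis unfolding best_response_def
    proof (intro conjI allI impI)
      show "nonneg_mat 1 1 (AA s)" by (simp add: nonneg_mat_def AA_def)
      fix A' assume "nonneg_mat 1 1 A'"
      then have "A' 0 0 \<ge> 0" by (simp add: nonneg_mat_def)
      moreover have "A' 0 0 powr q / q \<ge> 0" using assms(2) by simp
      ultimately show "user_obj q 1 1 ?x uu (HH s) A' \<le> user_obj q 1 1 ?x uu (HH s) (AA s)"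
        using False assms(2) apply (simp add: user_obj_def HH_def AA_def uu_def hg_def)
        using \<open>A' 0 0 \<ge> 0\<close> \<open>A' 0 0 powr q / q \<ge> 0\<close> by linarith
    qed
  qed
  have c7: "service_loss 1 1 ?x ?y ll (memory p AA s) (HH (Suc s))
            \<le> service_loss 1 1 ?x ?y ll (memory p AA s) H" if "in_Hm 1 ?Hs H" for s H
  proof -
    have lhs: "service_loss 1 1 ?x ?y ll (memory p AA s) (HH (Suc s)) = 0"
    proof (cases s)
      case 0 then show ?thesis by (simp add: service_loss_def AA_def)
    next
      case (Suc k) then show ?thesis by (simp add: service_loss_def HH_def ll_def hg_def)
    qed
    have "service_loss 1 1 ?x ?y ll (memory p AA s) H \<ge> 0"
      unfolding service_loss_def using mem_nonneg[OF assms(1), of s 0 0]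
      by (intro sum_nonneg mult_nonneg_nonneg) (auto simp: ll_def)
    then show ?thesis using lhs by simp
  qed
  have c8: "zero_loss 1 1 ?x ?y uu ll (HH 0) (AA 0)"
    by (simp add: zero_loss_def HH_def AA_def uu_def hg_def)
  have c9: "\<not> zero_loss 1 1 ?x ?y uu ll (HH 1) (AA 1)"
    by (simp add: zero_loss_def HH_def AA_def uu_def hb_def)
  show ?thesis
    apply (rule exI[of _ 1], rule exI[of _ 1], rule exI[of _ ?x], rule exI[of _ ?y],
           rule exI[of _ ?Hs], rule exI[of _ uu], rule exI[of _ ll], rule exI[of _ HH],
           rule exI[of _ AA], rule exI[of _ 0], rule exI[of _ 1])
    using c1 c2 c3 c4 c5 c6 c7 c8 c9 by auto
qed

end
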